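(* In the discrete torus model with frame group $\mathbb{Z}_4$ and calculus $\{\bar1,\bar3\}$ (context), assume the reality condition $\overline{\Theta_a}=R_a\Theta_a$ ($a=1,2$). Then a torsion-free cotorsion-free connection (parametrised by $a,b$) satisfies the reality condition $A_{\bar1}^*=A_{\bar3}$ if and only if $\bar a=R_2a$ and $\bar b=R_1b$. Under these conditions the regularity condition $s_1\bar\partial^2a-s_2\bar\partial^1b=0$ is invariant under complex conjugation, and the function \[R=\partial^1b+\partial^2a+s_1R_1b+s_2R_2a-2bR_1b-2aR_2a\] satisfies $\bar R=R+\bar\partial^1\big(\partial^1b+s_1R_1b\big)+\bar\partial^2\big(\partial^2a+s_2R_2a\big)$; in particular $\sum_{x\in\Sigma}R(x)$ is real.
   Context: Discrete torus model: $\Sigma=\mathbb{Z}_2\times\mathbb{Z}_2$, $x\to y$ iff $y-x\in\{(1,0),(0,1)\}$; diagonal zweibein $e_{1,x,x+(1,0)}=\Theta_1(x)^{-1}$, $e_{2,x,x+(0,1)}=\Theta_2(x)^{-1}$, $\Theta_a$ nowhere-vanishing with $\Theta_1R_1\Theta_2=\Theta_2R_2\Theta_1$; $R_1f(x)=f(x+(1,0))$, $R_2f(x)=f(x+(0,1))$, $\bar\partial^a=R_a-\mathrm{id}$, $\partial^a=\Theta_a\bar\partial^a$, $s_1=\bar\partial^2\Theta_1$, $s_2=\bar\partial^1\Theta_2$; $e_af=R_a(f)e_a$, $\mathrm{d}f=\sum_a(\partial^af)e_a$. Frame group $\mathbb{Z}_4$ acting by quarter rotations with calculus $\{\bar1,\bar3\}$;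 the torsion-free cotorsion-free connections are $A_{\bar1}=(-\alpha-\frac{s_1}{2})e_1+(\beta-\frac{s_2}{2})e_2$, $A_{\bar3}=(\beta-\frac{s_1}{2})e_1+(\alpha-\frac{s_2}{2})e_2$ with $a=\alpha+\beta$, $b=\beta-\alpha$ satisfying $(R_1+R_2)a=(R_1+R_2)b=0$. The $*$-structure: complex conjugation $f\mapsto\bar f$ on functions, extended antilinearly and antimultiplicatively to forms with $e_a^*=e_a$, so $(fe_a)^*=e_a\bar f=R_a(\bar f)e_a$. The reality condition $\theta^*=\theta$ for $\theta=\Theta_1e_1+\Theta_2e_2$ is $\overline{\Theta_a}=R_a\Theta_a$; the reality condition on spin connections is $A_i^*=A_{i^{-1}}$, here $A_{\bar1}^*=A_{\bar3}$. *)

theory Defs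
  imports Complex_Main "HOL-Library.Numeral_Type"
begin

text \<open>The discrete torus Sigma = Z_2 x Z_2, modelled by the finite ring type 2.\<close>
type_synonym pt = "2 \<times> 2"

definition R1 :: "(pt \<Rightarrow> complex) \<Rightarrow> pt \<Rightarrow> complex" where
  "R1 f = (\<lambda>x. f (fst x + 1, snd x))"
definition R2 :: "(pt \<Rightarrow> complex) \<Rightarrow> pt \<Rightarrow> complex" where
  "R2 f = (\<lambda>x. f (fst x, snd x + 1))"

definition dbar1 :: "(pt \<Rightarrow> complex) \<Rightarrow> pt \<Rightarrow> complex" where
  "dbar1 f = (\<lambda>x. R1 f x - f x)"
definition dbar2 :: "(pt \<Rightarrow> complex) \<Rightarrow> pt \<Rightarrow> complex" where
  "dbar2 f = (\<lambda>x. R2 f x - f x)"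

definition conjf :: "(pt \<Rightarrow> complex) \<Rightarrow> pt \<Rightarrow> complex" where
  "conjf f = (\<lambda>x. cnj (f x))"

text \<open>A 1-form f_1 e_1 + f_2 e_2 (coefficients on the left) is represented by the pair (f_1, f_2).
  Its *-adjoint: (f e_a)^* = e_a conj f = R_a(conj f) e_a.\<close>
definition form_star :: "(pt \<Rightarrow> complex) \<times> (pt \<Rightarrow> complex) \<Rightarrow> (pt \<Rightarrow> complex) \<times> (pt \<Rightarrow> complex)" where
  "form_star A = (R1 (conjf (fst A)), R2 (conjf (snd A)))"

text \<open>Spin connections A_{1bar}, A_{3bar} with s_1 = dbar^2 Theta_1, s_2 = dbar^1 Theta_2.\<close>
definition A_1 :: "(pt \<Rightarrow> complex) \<Rightarrow> (pt \<Rightarrow> complex) \<Rightarrow> (pt \<Rightarrow> complex) \<Rightarrow> (pt \<Rightarrow> complex)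
    \<Rightarrow> (pt \<Rightarrow> complex) \<times> (pt \<Rightarrow> complex)" where
  "A_1 Th1 Th2 \<alpha> \<beta> = ((\<lambda>x. - \<alpha> x - dbar2 Th1 x / 2), (\<lambda>x. \<beta> x - dbar1 Th2 x / 2))"
definition A_3 :: "(pt \<Rightarrow> complex) \<Rightarrow> (pt \<Rightarrow> complex) \<Rightarrow> (pt \<Rightarrow> complex) \<Rightarrow> (pt \<Rightarrow> complex)
    \<Rightarrow> (pt \<Rightarrow> complex) \<times> (pt \<Rightarrow> complex)" where
  "A_3 Th1 Th2 \<alpha> \<beta> = ((\<lambda>x. \<beta> x - dbar2 Th1 x / 2), (\<lambda>x. \<alpha> x - dbar1 Th2 x / 2))"

end

theory Submission
  imports Defs
begin

lemma ex2: "(x::2) = 0 \<or> x = 1"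
proof (induct x)
  case (of_int z)
  then have "z = 0 \<or> z = 1" by auto
  then show ?case by auto
qed

lemma all_2: "(\<forall>x::2. P x) \<longleftrightarrow> P 0 \<and> P 1"
proof
  assume h: "P 0 \<and> P 1"
  show "\<forall>x. P x"
  proof
    fix x :: 2
    show "P x" using ex2[of x] h by auto
  qed
qed simp

lemma all_pt: "(\<forall>x::pt. P x) \<longleftrightarrow> P (0,0) \<and> P (0,1) \<and> P (1,0) \<and> P (1,1)"
  by (simp only: split_paired_All all_2 conj_assoc)

lemma fun_eq_pt: "((f::pt \<Rightarrow> 'b) = g) \<longleftrightarrow>
   f (0,0) = g (0,0) \<and> f (0,1) = g (0,1) \<and> f (1,0) = g (1,0) \<and> f (1,1) = g (1,1)"
  unfolding fun_eq_iff by (rule all_pt)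

lemma UNIV_pt: "(UNIV::pt set) = {(0,0),(0,1),(1,0),(1,1)}"
  using ex2 by auto

lemma sum_pt: "(\<Sum>x\<in>UNIV. (f::pt \<Rightarrow> complex) x) = f (0,0) + f (0,1) + f (1,0) + f (1,1)"
  by (simp add: UNIV_pt)

lemma one_one2[simp]: "(1::2) + 1 = 0" by simp
lemma two2[simp]: "(2::2) = 0" by simp

lemma part2:
  fixes Th1 Th2 a b :: "pt \<Rightarrow> complex"
  defines "s1 \<equiv> dbar2 Th1" and "s2 \<equiv> dbar1 Th2"
  defines "d1 \<equiv> (\<lambda>f x. Th1 x * dbar1 f x)" and "d2 \<equiv> (\<lambda>f x. Th2 x * dbar2 f x)"
  defines "Q \<equiv> (\<lambda>x. s1 x * dbar2 a x - s2 x * dbar1 b x)"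
  defines "Rc \<equiv> (\<lambda>x. d1 b x + d2 a x + s1 x * R1 b x + s2 x * R2 a x
                      - 2 * b x * R1 b x - 2 * a x * R2 a x)"
  assumes real_theta1: "conjf Th1 = R1 Th1" and real_theta2: "conjf Th2 = R2 Th2"
    and tf_a: "\<forall>x. R1 a x + R2 a x = 0" and tf_b: "\<forall>x. R1 b x + R2 b x = 0"
    and ra: "conjf a = R2 a" and rb: "conjf b = R1 b"
  shows "conjf Q = (\<lambda>x. - R1 (R2 Q) x)
             \<and> (\<forall>x. Q x = 0) = (\<forall>x. cnj (Q x) = 0)
             \<and> conjf Rc = (\<lambda>x. Rc x + dbar1 (\<lambda>y. d1 b y + s1 y * R1 b y) x
                                   + dbar2 (\<lambda>y. d2 a y + s2 y * R2 a y) x)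
             \<and> (\<Sum>x\<in>UNIV. Rc x) \<in> \<real>"
proof -
  have A: "a (1,0) = - a (0,1)" "a (1,1) = - a (0,0)"
  proof -
    have "R1 a (0,0) + R2 a (0,0) = 0" "R1 a (1,0) + R2 a (1,0) = 0" using tf_a by auto
    then show "a (1,0) = - a (0,1)" "a (1,1) = - a (0,0)"
      by (simp_all add: R1_def R2_def eq_neg_iff_add_eq_0 add.commute)
  qed
  have B: "b (1,0) = - b (0,1)" "b (1,1) = - b (0,0)"
  proof -
    have "R1 b (0,0) + R2 b (0,0) = 0" "R1 b (0,1) + R2 b (0,1) = 0" using tf_b by auto
    then show "b (1,0) = - b (0,1)" "b (1,1) = - b (0,0)"
      by (simp_all add: R1_def R2_def eq_neg_iff_add_eq_0 add.commute)
  qed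
  have cA: "cnj (a (0,0)) = a (0,1)" "cnj (a (0,1)) = a (0,0)"
    using ra by (simp_all add: fun_eq_pt R2_def conjf_def)
  have cB: "cnj (b (0,0)) = - b (0,1)" "cnj (b (0,1)) = - b (0,0)"
    using rb B by (simp_all add: fun_eq_pt R1_def conjf_def)
  have cT1: "cnj (Th1 (0,0)) = Th1 (1,0)" "cnj (Th1 (0,1)) = Th1 (1,1)"
     "cnj (Th1 (1,0)) = Th1 (0,0)" "cnj (Th1 (1,1)) = Th1 (0,1)"
    using real_theta1 by (simp_all add: fun_eq_pt R1_def conjf_def)
  have cT2: "cnj (Th2 (0,0)) = Th2 (0,1)" "cnj (Th2 (0,1)) = Th2 (0,0)"
     "cnj (Th2 (1,0)) = Th2 (1,1)" "cnj (Th2 (1,1)) = Th2 (1,0)"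
    using real_theta2 by (simp_all add: fun_eq_pt R2_def conjf_def)
  note S = A B cA cB cT1 cT2 s1_def s2_def d1_def d2_def R1_def R2_def dbar1_def dbar2_def conjf_def
  have G1: "conjf Q = (\<lambda>x. - R1 (R2 Q) x)"
    unfolding Q_def by (simp add: fun_eq_pt S; (intro conjI; algebra)?)
  have G2: "(\<forall>x. Q x = 0) = (\<forall>x. cnj (Q x) = 0)" by simp
  have G3: "conjf Rc = (\<lambda>x. Rc x + dbar1 (\<lambda>y. d1 b y + s1 y * R1 b y) x
                                   + dbar2 (\<lambda>y. d2 a y + s2 y * R2 a y) x)"
    unfolding Rc_def by (simp add: fun_eq_pt S)
  have G4: "(\<Sum>x\<in>UNIV. Rc x) \<in> \<real>"
    unfolding sum_pt Complex.Reals_cnj_iff Rc_def by (simp add: S; algebra)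
  show ?thesis using G1 G2 G3 G4 by blast
qed

lemma pp2[simp]: "(x::2) + 1 + 1 = x"
  using ex2[of x] by auto

lemma lin2:
  fixes p0 p1 q0 q1 P0 P1 Q0 Q1 :: complex
  shows "(P1 = q0 \<and> P0 = q1 \<and> P0 = q1 \<and> P1 = q0 \<and> Q1 = p0 \<and> Q0 = p1 \<and> Q0 = p1 \<and> Q1 = p0) =
   (P0 + Q0 = p1 + q1 \<and> P1 + Q1 = p0 + q0 \<and> - P1 + - Q1 = - p0 + - q0 \<and> - P0 + - Q0 = - p1 + - q1 \<and>
    Q0 - P0 = - q1 + p1 \<and> Q1 - P1 = - q0 + p0 \<and> - Q1 + P1 = q0 - p0 \<and> - Q0 + P0 = q1 - p1)"
proof
  assume "P0 + Q0 = p1 + q1 \<and> P1 + Q1 = p0 + q0 \<and> - P1 + - Q1 = - p0 + - q0 \<and> - P0 + - Q0 = - p1 + - q1 \<and>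
    Q0 - P0 = - q1 + p1 \<and> Q1 - P1 = - q0 + p0 \<and> - Q1 + P1 = q0 - p0 \<and> - Q0 + P0 = q1 - p1"
  then have e1: "P0 + Q0 = p1 + q1" and e2: "P1 + Q1 = p0 + q0"
    and e5: "Q0 - P0 = - q1 + p1" and e6: "Q1 - P1 = - q0 + p0" by blast+
  have "2 * Q0 = (P0 + Q0) + (Q0 - P0)" by simp
  also have "\<dots> = (p1 + q1) + (- q1 + p1)" by (simp only: e1 e5)
  also have "\<dots> = 2 * p1" by simp
  finally have f1: "Q0 = p1" by simp
  have "2 * P0 = (P0 + Q0) - (Q0 - P0)" by simp
  also have "\<dots> = (p1 + q1) - (- q1 + p1)" by (simp only: e1 e5)
  also have "\<dots> = 2 * q1" by simp
  finally have f2: "P0 = q1" by simp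
  have "2 * Q1 = (P1 + Q1) + (Q1 - P1)" by simp
  also have "\<dots> = (p0 + q0) + (- q0 + p0)" by (simp only: e2 e6)
  also have "\<dots> = 2 * p0" by simp
  finally have f3: "Q1 = p0" by simp
  have "2 * P1 = (P1 + Q1) - (Q1 - P1)" by simp
  also have "\<dots> = (p0 + q0) - (- q0 + p0)" by (simp only: e2 e6)
  also have "\<dots> = 2 * q0" by simp
  finally have f4: "P1 = q0" by simp
  show "P1 = q0 \<and> P0 = q1 \<and> P0 = q1 \<and> P1 = q0 \<and> Q1 = p0 \<and> Q0 = p1 \<and> Q0 = p1 \<and> Q1 = p0"
    using f1 f2 f3 f4 by blast
next
  assume "P1 = q0 \<and> P0 = q1 \<and> P0 = q1 \<and> P1 = q0 \<and> Q1 = p0 \<and> Q0 = p1 \<and> Q0 = p1 \<and> Q1 = p0"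
  then have "P1 = q0" "P0 = q1" "Q1 = p0" "Q0 = p1" by blast+
  then show "P0 + Q0 = p1 + q1 \<and> P1 + Q1 = p0 + q0 \<and> - P1 + - Q1 = - p0 + - q0 \<and> - P0 + - Q0 = - p1 + - q1 \<and>
    Q0 - P0 = - q1 + p1 \<and> Q1 - P1 = - q0 + p0 \<and> - Q1 + P1 = q0 - p0 \<and> - Q0 + P0 = q1 - p1"
    by (simp add: algebra_simps)
qed

lemma part1:
  fixes Th1 Th2 \<alpha> \<beta> a b :: "pt \<Rightarrow> complex"
  assumes real_theta1: "conjf Th1 = R1 Th1" and real_theta2: "conjf Th2 = R2 Th2"
    and a_def: "a = (\<lambda>x. \<alpha> x + \<beta> x)" and b_def: "b = (\<lambda>x. \<beta> x - \<alpha> x)"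
    and tf_a: "\<forall>x. R1 a x + R2 a x = 0" and tf_b: "\<forall>x. R1 b x + R2 b x = 0"
  shows "form_star (A_1 Th1 Th2 \<alpha> \<beta>) = A_3 Th1 Th2 \<alpha> \<beta>
            \<longleftrightarrow> (conjf a = R2 a \<and> conjf b = R1 b)"
proof -
  have t1: "cnj (Th1 (u,v)) = Th1 (u+1,v)" for u v
    using fun_cong[OF real_theta1, of "(u,v)"] by (simp add: R1_def conjf_def)
  have t2: "cnj (Th2 (u,v)) = Th2 (u,v+1)" for u v
    using fun_cong[OF real_theta2, of "(u,v)"] by (simp add: R2_def conjf_def)
  have s1r: "cnj (dbar2 Th1 (u+1,v)) = dbar2 Th1 (u,v)" for u v
    by (simp add: dbar2_def R2_def t1)
  have s2r: "cnj (dbar1 Th2 (u,v+1)) = dbar1 Th2 (u,v)" for u v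
    by (simp add: dbar1_def R1_def t2)
  have L: "form_star (A_1 Th1 Th2 \<alpha> \<beta>) = A_3 Th1 Th2 \<alpha> \<beta> \<longleftrightarrow>
     (\<forall>u v. cnj (\<alpha> (u+1,v)) = - \<beta> (u,v)) \<and> (\<forall>u v. cnj (\<beta> (u,v+1)) = \<alpha> (u,v))"
  proof -
    have e1: "(- cnj (\<alpha> (u+1,v)) - cnj (dbar2 Th1 (u+1,v) / 2) = \<beta> (u,v) - dbar2 Th1 (u,v) / 2)
       \<longleftrightarrow> cnj (\<alpha> (u+1,v)) = - \<beta> (u,v)" for u v
    proof -
      have "cnj (dbar2 Th1 (u+1,v) / 2) = dbar2 Th1 (u,v) / 2" using s1r[of u v] by simp
      then have "(- cnj (\<alpha> (u+1,v)) - cnj (dbar2 Th1 (u+1,v) / 2) = \<beta> (u,v) - dbar2 Th1 (u,v) / 2)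
         \<longleftrightarrow> - cnj (\<alpha> (u+1,v)) = \<beta> (u,v)" by simp
      also have "\<dots> \<longleftrightarrow> cnj (\<alpha> (u+1,v)) = - \<beta> (u,v)" by (metis minus_minus)
      finally show ?thesis .
    qed
    have e2: "(cnj (\<beta> (u,v+1)) - cnj (dbar1 Th2 (u,v+1) / 2) = \<alpha> (u,v) - dbar1 Th2 (u,v) / 2)
       \<longleftrightarrow> cnj (\<beta> (u,v+1)) = \<alpha> (u,v)" for u v
    proof -
      have "cnj (dbar1 Th2 (u,v+1) / 2) = dbar1 Th2 (u,v) / 2" using s2r[of u v] by simp
      then show ?thesis by simp
    qed
    show ?thesis
      by (simp add: form_star_def A_1_def A_3_def R1_def R2_def conjf_def fun_eq_iff e1 e2 del: complex_cnj_divide)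
  qed
  have Rr: "(conjf a = R2 a \<and> conjf b = R1 b) \<longleftrightarrow>
    (\<forall>u v. cnj (\<alpha> (u,v)) + cnj (\<beta> (u,v)) = \<alpha> (u,v+1) + \<beta> (u,v+1)) \<and>
    (\<forall>u v. cnj (\<beta> (u,v)) - cnj (\<alpha> (u,v)) = \<beta> (u+1,v) - \<alpha> (u+1,v))"
    by (simp add: a_def b_def conjf_def R1_def R2_def fun_eq_iff)
  have tt: "\<alpha> (u+1,v) + \<alpha> (u,v+1) = 0 \<and> \<beta> (u+1,v) + \<beta> (u,v+1) = 0" for u v
  proof -
    have "a (u+1,v) + a (u,v+1) = 0" "b (u+1,v) + b (u,v+1) = 0"
      using tf_a tf_b by (auto simp: R1_def R2_def)
    moreover have "2 * (\<alpha> (u+1,v) + \<alpha> (u,v+1)) = (a (u+1,v) + a (u,v+1)) - (b (u+1,v) + b (u,v+1))"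
      "2 * (\<beta> (u+1,v) + \<beta> (u,v+1)) = (a (u+1,v) + a (u,v+1)) + (b (u+1,v) + b (u,v+1))"
      unfolding a_def b_def by (simp_all add: algebra_simps)
    ultimately have "2 * (\<alpha> (u+1,v) + \<alpha> (u,v+1)) = 0" "2 * (\<beta> (u+1,v) + \<beta> (u,v+1)) = 0"
      by simp_all
    then show ?thesis by (metis mult_eq_0_iff zero_neq_numeral)
  qed
  have at: "\<alpha> (1,0) = - \<alpha> (0,1)" "\<alpha> (1,1) = - \<alpha> (0,0)"
     "\<beta> (1,0) = - \<beta> (0,1)" "\<beta> (1,1) = - \<beta> (0,0)"
  proof -
    have "\<alpha> (1,0) + \<alpha> (0,1) = 0" "\<alpha> (0,0) + \<alpha> (1,1) = 0"
      "\<beta> (1,0) + \<beta> (0,1) = 0" "\<beta> (0,0) + \<beta> (1,1) = 0"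
      using tt[of 0 0] tt[of 1 0] by simp_all
    then show "\<alpha> (1,0) = - \<alpha> (0,1)" "\<alpha> (1,1) = - \<alpha> (0,0)"
     "\<beta> (1,0) = - \<beta> (0,1)" "\<beta> (1,1) = - \<beta> (0,0)"
      by (metis add.commute eq_neg_iff_add_eq_0)+
  qed
  show ?thesis unfolding L Rr
    apply (simp only: all_2 add_0_left one_one2 at minus_minus diff_minus_eq_add conj_assoc complex_cnj_minus neg_equal_iff_equal)
    apply (rule lin2)
    done
qed

theorem proposition5p1:
  fixes Th1 Th2 \<alpha> \<beta> a b :: "pt \<Rightarrow> complex"
  defines "s1 \<equiv> dbar2 Th1" and "s2 \<equiv> dbar1 Th2"
  defines "d1 \<equiv> (\<lambda>f x. Th1 x * dbar1 f x)" and "d2 \<equiv> (\<lambda>f x. Th2 x * dbar2 f x)"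
  defines "Q \<equiv> (\<lambda>x. s1 x * dbar2 a x - s2 x * dbar1 b x)"
  defines "Rc \<equiv> (\<lambda>x. d1 b x + d2 a x + s1 x * R1 b x + s2 x * R2 a x
                      - 2 * b x * R1 b x - 2 * a x * R2 a x)"
  assumes nonvan1: "\<forall>x. Th1 x \<noteq> 0" and nonvan2: "\<forall>x. Th2 x \<noteq> 0"
    and zweibein: "\<forall>x. Th1 x * R1 Th2 x = Th2 x * R2 Th1 x"
    and real_theta1: "conjf Th1 = R1 Th1" and real_theta2: "conjf Th2 = R2 Th2"
    and a_def: "a = (\<lambda>x. \<alpha> x + \<beta> x)" and b_def: "b = (\<lambda>x. \<beta> x - \<alpha> x)"
    and tf_a: "\<forall>x. R1 a x + R2 a x = 0" and tf_b: "\<forall>x. R1 b x + R2 b x = 0"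
  shows "(form_star (A_1 Th1 Th2 \<alpha> \<beta>) = A_3 Th1 Th2 \<alpha> \<beta>
            \<longleftrightarrow> (conjf a = R2 a \<and> conjf b = R1 b))
       \<and> ((conjf a = R2 a \<and> conjf b = R1 b) \<longrightarrow>
            (conjf Q = (\<lambda>x. - R1 (R2 Q) x)
             \<and> (\<forall>x. Q x = 0) = (\<forall>x. cnj (Q x) = 0)
             \<and> conjf Rc = (\<lambda>x. Rc x + dbar1 (\<lambda>y. d1 b y + s1 y * R1 b y) x
                                   + dbar2 (\<lambda>y. d2 a y + s2 y * R2 a y) x)
             \<and> (\<Sum>x\<in>UNIV. Rc x) \<in> \<real>))"
  using part1[OF real_theta1 real_theta2 a_def b_def tf_a tf_b]
    part2[OF real_theta1 real_theta2 tf_a tf_b]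
  unfolding s1_def s2_def d1_def d2_def Q_def Rc_def
  by blast

end
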